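(* Let $(M,d)$ be a bounded hyperconvex metric space and let $T: M\to M$ be a mapping which diminishes the radius of invariant admissible subsets of $M$. Then $T$ has a fixed point, and the fixed point set $F(T)=\{x\in M: Tx=x\}$ (with the induced metric) is hyperconvex.
   Context: A metric space $(M,d)$ is hyperconvex if for every family of closed balls $\{B(x_i,r_i)\}_{i\in I}$ in $M$ with $d(x_i,x_j)\le r_i+r_j$ for all $i,j\in I$, one has $\bigcap_{i\in I}B(x_i,r_i)\neq\emptyset$. For $x\in M$ and $K\subseteq M$, $r_x(K)=\sup\{d(x,y):y\in K\}$. A bounded subset $K\subseteq M$ is admissible if it equals the intersection of all closed balls of $M$ containing it. $T$ diminishes the radius of invariant admissible subsets if for every admissible $A\subseteq M$ with $T(A)\subseteq A$, $r_{Tx}(T(A))\le r_x(A)$ for every $x\in M$. *)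

theory Defs
  imports "HOL-Analysis.Analysis"
begin

text \<open>A metric space is modelled as a subset M of a type of class metric_space,
  carrying the induced metric dist. Closed balls of M are cball x r \<inter> M with x \<in> M.\<close>

definition mball :: "'a::metric_space set \<Rightarrow> 'a \<Rightarrow> real \<Rightarrow> 'a set" where
  "mball M x r = {y \<in> M. dist x y \<le> r}"

definition hyperconvex :: "'a::metric_space set \<Rightarrow> bool" where
  "hyperconvex M \<longleftrightarrow>
     (\<forall>(I::('a \<times> real) set).
        I \<subseteq> M \<times> UNIV \<longrightarrow>
        (\<forall>(x,r)\<in>I. \<forall>(y,s)\<in>I. dist x y \<le> r + s) \<longrightarrow>
        M \<inter> (\<Inter>(x,r)\<in>I. mball M x r) \<noteq> {})"

definition radius_at :: "'a::metric_space \<Rightarrow> 'a set \<Rightarrow> real" where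
  "radius_at x K = (SUP y\<in>K. dist x y)"

definition admissible :: "'a::metric_space set \<Rightarrow> 'a set \<Rightarrow> bool" where
  "admissible M K \<longleftrightarrow> K \<subseteq> M \<and> bounded K \<and>
     K = M \<inter> \<Inter>{mball M x r | x r. x \<in> M \<and> K \<subseteq> mball M x r}"

definition diminishes_radius :: "'a::metric_space set \<Rightarrow> ('a \<Rightarrow> 'a) \<Rightarrow> bool" where
  "diminishes_radius M T \<longleftrightarrow>
     (\<forall>A. admissible M A \<and> T ` A \<subseteq> A \<longrightarrow>
        (\<forall>x\<in>M. radius_at (T x) (T ` A) \<le> radius_at x A))"

end

theory Submission
  imports Defs
begin

lemma adm_memI:
  assumes "admissible M K" "p \<in> M"
    "\<And>x r. x \<in> M \<Longrightarrow> K \<subseteq> mball M x r \<Longrightarrow> p \<in> mball M x r"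
  shows "p \<in> K"
proof -
  have eq: "K = M \<inter> \<Inter>{mball M x r | x r. x \<in> M \<and> K \<subseteq> mball M x r}"
    using assms(1) unfolding admissible_def by (elim conjE)
  have X: "p \<in> \<Inter>{mball M x r | x r. x \<in> M \<and> K \<subseteq> mball M x r}"
  proof (rule InterI)
    fix S assume "S \<in> {mball M x r | x r. x \<in> M \<and> K \<subseteq> mball M x r}"
    then obtain x r where "S = mball M x r" "x \<in> M" "K \<subseteq> mball M x r" by blast
    then show "p \<in> S" using assms(3) by simp
  qed
  have "p \<in> M \<inter> \<Inter>{mball M x r | x r. x \<in> M \<and> K \<subseteq> mball M x r}"
    using assms(2) X by (rule IntI)
  moreover have "M \<inter> \<Inter>{mball M x r | x r. x \<in> M \<and> K \<subseteq> mball M x r} \<subseteq> K"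
    using eq by (rule equalityD2)
  ultimately show ?thesis by (rule subsetD[rotated])
qed

lemma adm_sub: "admissible M K \<Longrightarrow> K \<subseteq> M"
  unfolding admissible_def by (elim conjE)

lemma adm_inter_balls:
  assumes "bounded M" "I \<subseteq> M \<times> UNIV"
  shows "admissible M (M \<inter> (\<Inter>(x,r)\<in>I. mball M x r))"
proof -
  let ?K = "M \<inter> (\<Inter>(x,r)\<in>I. mball M x r)"
  have "?K \<subseteq> M \<inter> \<Inter>{mball M x r | x r. x \<in> M \<and> ?K \<subseteq> mball M x r}"
    by blast
  moreover have "M \<inter> \<Inter>{mball M x r | x r. x \<in> M \<and> ?K \<subseteq> mball M x r} \<subseteq> ?K"
  proof
    fix p assume p: "p \<in> M \<inter> \<Inter>{mball M x r | x r. x \<in> M \<and> ?K \<subseteq> mball M x r}"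
    have "p \<in> mball M x r" if "(x,r) \<in> I" for x r
    proof -
      have "x \<in> M" using that assms(2) by blast
      moreover have "?K \<subseteq> mball M x r" using that by blast
      ultimately show ?thesis using p by blast
    qed
    then show "p \<in> ?K" using p by blast
  qed
  moreover have "bounded ?K" using assms(1) bounded_subset by blast
  moreover have "?K \<subseteq> M" by blast
  ultimately show ?thesis unfolding admissible_def by (intro conjI) (assumption | rule equalityI)+
qed

lemma radius_le:
  assumes "bounded M" "K \<subseteq> M" "y \<in> K"
  shows "dist x y \<le> radius_at x K"
proof -
  have "bounded K" using assms bounded_subset by blast
  then obtain e where "\<forall>y\<in>K. dist x y \<le> e" using bounded_any_center by metis
  then have "bdd_above ((\<lambda>y. dist x y) ` K)"
    by (metis bdd_above.I2)
  then show ?thesis unfolding radius_at_def using assms(3) by (rule cSUP_upper2) simp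
qed

lemma radius_least:
  assumes "K \<noteq> {}" "\<And>y. y \<in> K \<Longrightarrow> dist x y \<le> r"
  shows "radius_at x K \<le> r"
  unfolding radius_at_def using assms by (rule cSUP_least)

lemma minimal_exists:
  assumes "F \<noteq> {}"
    and ch: "\<And>C. C \<noteq> {} \<Longrightarrow> C \<subseteq> F \<Longrightarrow> (\<forall>X\<in>C. \<forall>Y\<in>C. X \<subseteq> Y \<or> Y \<subseteq> X) \<Longrightarrow> \<Inter>C \<in> F"
  shows "\<exists>A\<in>F. \<forall>X\<in>F. X \<subseteq> A \<longrightarrow> X = A"
proof -
  have "\<exists>N\<in>uminus ` F. \<forall>X\<in>uminus ` F. N \<subseteq> X \<longrightarrow> X = N"
  proof (rule subset_Zorn_nonempty)
    show "uminus ` F \<noteq> {}" using assms(1) by blast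
    fix C assume C: "C \<noteq> {}" "subset.chain (uminus ` F) C"
    let ?D = "uminus ` C"
    have D1: "?D \<noteq> {}" using C by blast
    have D2: "?D \<subseteq> F" using C unfolding subset_chain_def by auto
    have D3: "\<forall>X\<in>?D. \<forall>Y\<in>?D. X \<subseteq> Y \<or> Y \<subseteq> X" using C unfolding subset_chain_def by blast
    have "\<Inter>?D \<in> F" using ch[OF D1 D2 D3] .
    moreover have "\<Union>C = - \<Inter>?D" by auto
    ultimately show "\<Union>C \<in> uminus ` F" by blast
  qed
  then obtain N where N: "N \<in> uminus ` F" "\<forall>X\<in>uminus ` F. N \<subseteq> X \<longrightarrow> X = N"
    by (rule bexE)
  then obtain A where A: "A \<in> F" "N = - A" by blast
  show ?thesis
  proof (rule bexI[OF _ A(1)], intro ballI impI)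
    fix X assume X: "X \<in> F" "X \<subseteq> A"
    have "- X \<in> uminus ` F" using X(1) by (rule imageI)
    moreover have "N \<subseteq> - X" using X(2) A(2) by (simp add: Compl_subset_Compl_iff)
    ultimately have "- X = N" by (rule N(2)[rule_format])
    then show "X = A" using A(2) by simp
  qed
qed

lemma hyperD:
  assumes "hyperconvex M" "I \<subseteq> M \<times> UNIV"
    "\<And>x r y s. (x,r) \<in> I \<Longrightarrow> (y,s) \<in> I \<Longrightarrow> dist x y \<le> r + s"
  shows "\<exists>p\<in>M. \<forall>x r. (x,r) \<in> I \<longrightarrow> p \<in> mball M x r"
proof -
  have "\<forall>(x,r)\<in>I. \<forall>(y,s)\<in>I. dist x y \<le> r + s" using assms(3) by blast
  moreover have "\<forall>I. I \<subseteq> M \<times> UNIV \<longrightarrow>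
        (\<forall>(x,r)\<in>I. \<forall>(y,s)\<in>I. dist x y \<le> r + s) \<longrightarrow>
        M \<inter> (\<Inter>(x,r)\<in>I. mball M x r) \<noteq> {}"
    using assms(1) unfolding hyperconvex_def .
  ultimately have "M \<inter> (\<Inter>(x,r)\<in>I. mball M x r) \<noteq> {}"
    using assms(2) by blast
  then obtain p where "p \<in> M" "p \<in> (\<Inter>(x,r)\<in>I. mball M x r)" by blast
  then show ?thesis by blast
qed

lemma mball_iff: "p \<in> mball M x r \<longleftrightarrow> p \<in> M \<and> dist x p \<le> r"
  unfolding mball_def by simp

lemma chain_inter:
  assumes bM: "bounded M" and hM: "hyperconvex M" and C: "C \<noteq> {}"
    "\<And>A. A \<in> C \<Longrightarrow> admissible M A" "\<And>A. A \<in> C \<Longrightarrow> A \<noteq> {}"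
    "\<forall>X\<in>C. \<forall>Y\<in>C. X \<subseteq> Y \<or> Y \<subseteq> X"
  shows "admissible M (\<Inter>C) \<and> \<Inter>C \<noteq> {}"
proof
  obtain A0 where A0: "A0 \<in> C" using C(1) by blast
  have subM: "\<Inter>C \<subseteq> M" using A0 adm_sub[OF C(2)[OF A0]] by blast
  have "\<Inter>C \<subseteq> M \<inter> \<Inter>{mball M x r | x r. x \<in> M \<and> \<Inter>C \<subseteq> mball M x r}"
    using subM by blast
  moreover have "M \<inter> \<Inter>{mball M x r | x r. x \<in> M \<and> \<Inter>C \<subseteq> mball M x r} \<subseteq> \<Inter>C"
  proof
    fix p assume p: "p \<in> M \<inter> \<Inter>{mball M x r | x r. x \<in> M \<and> \<Inter>C \<subseteq> mball M x r}"
    have "p \<in> A" if A: "A \<in> C" for A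
    proof (rule adm_memI[OF C(2)[OF A]])
      show "p \<in> M" using p by blast
      fix x r assume "x \<in> M" "A \<subseteq> mball M x r"
      then have "\<Inter>C \<subseteq> mball M x r" using A by blast
      then show "p \<in> mball M x r" using p \<open>x \<in> M\<close> by blast
    qed
    then show "p \<in> \<Inter>C" by blast
  qed
  moreover have "bounded (\<Inter>C)" using bM subM bounded_subset by blast
  ultimately show "admissible M (\<Inter>C)" unfolding admissible_def
    using subM by (intro conjI) (assumption | rule equalityI)+
  define I where "I = {(x,r). x \<in> M \<and> (\<exists>A\<in>C. A \<subseteq> mball M x r)}"
  have "\<exists>p\<in>M. \<forall>x r. (x,r) \<in> I \<longrightarrow> p \<in> mball M x r"
  proof (rule hyperD[OF hM])
    show "I \<subseteq> M \<times> UNIV" unfolding I_def by blast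
    fix x r y s assume xr: "(x,r) \<in> I" and ys: "(y,s) \<in> I"
    then obtain A1 A2 where A1: "A1 \<in> C" "A1 \<subseteq> mball M x r" and A2: "A2 \<in> C" "A2 \<subseteq> mball M y s"
      unfolding I_def by blast
    have "A1 \<inter> A2 \<noteq> {}"
    proof (cases "A1 \<subseteq> A2")
      case True then show ?thesis using C(3)[OF A1(1)] by blast
    next
      case False then have "A2 \<subseteq> A1" using C(4) A1(1) A2(1) by blast
      then show ?thesis using C(3)[OF A2(1)] by blast
    qed
    then obtain a where a: "a \<in> mball M x r" "a \<in> mball M y s" using A1 A2 by blast
    have "dist x y \<le> dist x a + dist y a" by (rule dist_triangle2)
    also have "\<dots> \<le> r + s" using a by (simp add: mball_iff)
    finally show "dist x y \<le> r + s" .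
  qed
  then obtain p where p: "p \<in> M" "\<forall>x r. (x,r) \<in> I \<longrightarrow> p \<in> mball M x r" by blast
  have "p \<in> A" if A: "A \<in> C" for A
  proof (rule adm_memI[OF C(2)[OF A] p(1)])
    fix x r assume "x \<in> M" "A \<subseteq> mball M x r"
    then have "(x,r) \<in> I" unfolding I_def using A by blast
    then show "p \<in> mball M x r" using p(2) by blast
  qed
  then show "\<Inter>C \<noteq> {}" by blast
qed


lemma fp_in_adm:
  assumes bM: "bounded M" and hM: "hyperconvex M" and TM: "T ` M \<subseteq> M"
    and dim: "diminishes_radius M T"
    and B: "admissible M B" "B \<noteq> {}" "T ` B \<subseteq> B"
  shows "\<exists>p\<in>B. T p = p"
proof -
  define F where "F = {A. admissible M A \<and> A \<noteq> {} \<and> T ` A \<subseteq> A \<and> A \<subseteq> B}"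
  have "\<exists>A\<in>F. \<forall>X\<in>F. X \<subseteq> A \<longrightarrow> X = A"
  proof (rule minimal_exists)
    show "F \<noteq> {}" using B unfolding F_def by blast
    fix C assume C: "C \<noteq> {}" "C \<subseteq> F" "\<forall>X\<in>C. \<forall>Y\<in>C. X \<subseteq> Y \<or> Y \<subseteq> X"
    have "admissible M (\<Inter>C) \<and> \<Inter>C \<noteq> {}"
    proof (rule chain_inter[OF bM hM C(1) _ _ C(3)])
      fix A assume "A \<in> C" then show "admissible M A" "A \<noteq> {}" using C(2) unfolding F_def by blast+
    qed
    moreover have "T ` \<Inter>C \<subseteq> \<Inter>C" using C(2) unfolding F_def by blast
    moreover have "\<Inter>C \<subseteq> B" using C(1,2) unfolding F_def by blast
    ultimately show "\<Inter>C \<in> F" unfolding F_def by blast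
  qed
  then obtain A where AF: "A \<in> F" and min: "\<And>X. X \<in> F \<Longrightarrow> X \<subseteq> A \<Longrightarrow> X = A" by blast
  have Aadm: "admissible M A" and Ane: "A \<noteq> {}" and TA: "T ` A \<subseteq> A" and AB: "A \<subseteq> B"
    using AF unfolding F_def by blast+
  have AM: "A \<subseteq> M" using adm_sub[OF Aadm] .
  have TAM: "T ` A \<subseteq> M" using TA AM by blast
  (* the admissible hull of T(A) equals A *)
  define J where "J = {(x,r). x \<in> M \<and> T ` A \<subseteq> mball M x r}"
  define K where "K = M \<inter> (\<Inter>(x,r)\<in>J. mball M x r)"
  have Kadm: "admissible M K" unfolding K_def by (rule adm_inter_balls[OF bM]) (auto simp: J_def)
  have TAK: "T ` A \<subseteq> K" unfolding K_def J_def using TAM by blast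
  have KA: "K \<subseteq> A"
  proof
    fix p assume p: "p \<in> K"
    show "p \<in> A"
    proof (rule adm_memI[OF Aadm])
      show "p \<in> M" using p unfolding K_def by blast
      fix x r assume "x \<in> M" "A \<subseteq> mball M x r"
      then have "(x,r) \<in> J" unfolding J_def using TA by blast
      then show "p \<in> mball M x r" using p unfolding K_def by blast
    qed
  qed
  have "K \<in> F" unfolding F_def using Kadm TAK KA Ane AB by blast
  then have KeqA: "K = A" using min KA by blast
  have rA: "dist x y \<le> radius_at x (T ` A)" if "x \<in> M" "y \<in> A" for x y
  proof -
    have "T ` A \<subseteq> mball M x (radius_at x (T ` A))"
      using radius_le[OF bM TAM] TAM by (auto simp: mball_iff)
    then have "(x, radius_at x (T ` A)) \<in> J" unfolding J_def using that by blast
    moreover have "y \<in> K" using KeqA that by blast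
    ultimately show ?thesis unfolding K_def by (auto simp: mball_iff)
  qed
  obtain e where e: "\<forall>x\<in>M. \<forall>y\<in>M. dist x y \<le> e" using bM bounded_two_points by metis
  define \<delta> where "\<delta> = (SUP p\<in>A \<times> A. dist (fst p) (snd p))"
  have bdd: "bdd_above ((\<lambda>p. dist (fst p) (snd p)) ` (A \<times> A))"
  proof (rule bdd_above.I2[where M=e])
    fix p assume "p \<in> A \<times> A"
    then have "fst p \<in> M" "snd p \<in> M" using AM by auto
    then show "dist (fst p) (snd p) \<le> e" using e by blast
  qed
  have dle: "dist y z \<le> \<delta>" if "y \<in> A" "z \<in> A" for y z
  proof -
    have "dist (fst (y,z)) (snd (y,z)) \<le> \<delta>" unfolding \<delta>_def
      by (rule cSUP_upper[OF _ bdd]) (use that in simp)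
    then show ?thesis by simp
  qed
  obtain a where a: "a \<in> A" using Ane by blast
  have d0: "0 \<le> \<delta>" using dle[OF a a] by simp
  define I where "I = {(x,r). x \<in> M \<and> A \<subseteq> mball M x r} \<union> (\<lambda>y. (y, \<delta>/2)) ` A"
  define Cn where "Cn = M \<inter> (\<Inter>(x,r)\<in>I. mball M x r)"
  have IM: "I \<subseteq> M \<times> UNIV" unfolding I_def using AM by blast
  have Cadm: "admissible M Cn" unfolding Cn_def by (rule adm_inter_balls[OF bM IM])
  have "\<exists>p\<in>M. \<forall>x r. (x,r) \<in> I \<longrightarrow> p \<in> mball M x r"
  proof (rule hyperD[OF hM IM])
    fix x r y s assume xr: "(x,r) \<in> I" and ys: "(y,s) \<in> I"
    have aux: "dist x y \<le> r + s" if "A \<subseteq> mball M x r" "(y,s) \<in> I" for x r y s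
    proof -
      have xa: "dist x a \<le> r" using that(1) a by (auto simp: mball_iff)
      show ?thesis
      proof (cases "A \<subseteq> mball M y s")
        case True
        then have "dist y a \<le> s" using a by (auto simp: mball_iff)
        then show ?thesis using xa dist_triangle2[of x y a] by linarith
      next
        case False
        then have "y \<in> A" "s = \<delta>/2" using that(2) unfolding I_def by auto
        then have "dist x y \<le> r" using that(1) by (auto simp: mball_iff)
        then show ?thesis using d0 \<open>s = \<delta>/2\<close> by linarith
      qed
    qed
    show "dist x y \<le> r + s"
    proof (cases "A \<subseteq> mball M x r")
      case True then show ?thesis using aux ys by blast
    next
      case False
      then have x: "x \<in> A" "r = \<delta>/2" using xr unfolding I_def by auto
      show ?thesis
      proof (cases "A \<subseteq> mball M y s")
        case True
        have "dist y x \<le> s + r" using aux[OF True xr] .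
        then show ?thesis by (simp add: dist_commute)
      next
        case False
        then have "y \<in> A" "s = \<delta>/2" using ys unfolding I_def by auto
        then show ?thesis using dle[OF x(1) \<open>y \<in> A\<close>] x(2) by linarith
      qed
    qed
  qed
  then obtain c where c: "c \<in> M" "\<forall>x r. (x,r) \<in> I \<longrightarrow> c \<in> mball M x r" by blast
  have cC: "c \<in> Cn" unfolding Cn_def using c by blast
  have CA: "Cn \<subseteq> A"
  proof
    fix p assume p: "p \<in> Cn"
    show "p \<in> A"
    proof (rule adm_memI[OF Aadm])
      show "p \<in> M" using p unfolding Cn_def by blast
      fix x r assume "x \<in> M" "A \<subseteq> mball M x r"
      then have "(x,r) \<in> I" unfolding I_def by blast
      then show "p \<in> mball M x r" using p unfolding Cn_def by blast
    qed
  qed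
  have inC: "p \<in> Cn" if "p \<in> A" and far: "\<And>y. y \<in> A \<Longrightarrow> dist y p \<le> \<delta>/2" for p
  proof -
    have "p \<in> M" using that AM by blast
    moreover have "p \<in> mball M x r" if "(x,r) \<in> I" for x r
    proof (cases "A \<subseteq> mball M x r")
      case True then show ?thesis using \<open>p \<in> A\<close> by blast
    next
      case False
      then have "x \<in> A" "r = \<delta>/2" using that unfolding I_def by auto
      then show ?thesis using \<open>p \<in> M\<close> far[of x] by (simp add: mball_iff)
    qed
    ultimately show ?thesis unfolding Cn_def by blast
  qed
  have Cfar: "dist y p \<le> \<delta>/2" if "p \<in> Cn" "y \<in> A" for p y
  proof -
    have "(y, \<delta>/2) \<in> I" unfolding I_def using that(2) by blast
    then show ?thesis using that(1) unfolding Cn_def by (auto simp: mball_iff)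
  qed
  have TC: "T ` Cn \<subseteq> Cn"
  proof
    fix q assume "q \<in> T ` Cn"
    then obtain x where x: "x \<in> Cn" "q = T x" by blast
    have xA: "x \<in> A" using x CA by blast
    have xM: "x \<in> M" using xA AM by blast
    have TxA: "T x \<in> A" using TA xA by blast
    have TxM: "T x \<in> M" using TxA AM by blast
    have "radius_at (T x) (T ` A) \<le> radius_at x A"
      using dim Aadm TA xM unfolding diminishes_radius_def by blast
    also have "radius_at x A \<le> \<delta>/2"
      by (rule radius_least[OF Ane]) (use Cfar[OF x(1)] in \<open>simp add: dist_commute\<close>)
    finally have rr: "radius_at (T x) (T ` A) \<le> \<delta>/2" .
    show "q \<in> Cn"
      unfolding x(2)
    proof (rule inC[OF TxA])
      fix y assume "y \<in> A"
      have "dist (T x) y \<le> radius_at (T x) (T ` A)" by (rule rA[OF TxM \<open>y \<in> A\<close>])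
      then show "dist y (T x) \<le> \<delta>/2" using rr by (simp add: dist_commute)
    qed
  qed
  have "Cn \<in> F" unfolding F_def using Cadm cC TC CA AB by blast
  then have CeqA: "Cn = A" using min CA by blast
  have "(SUP p\<in>A \<times> A. dist (fst p) (snd p)) \<le> \<delta>/2"
  proof (rule cSUP_least)
    show "A \<times> A \<noteq> {}" using a by blast
    fix p assume "p \<in> A \<times> A"
    then show "dist (fst p) (snd p) \<le> \<delta>/2"
      using Cfar CeqA by (cases p) auto
  qed
  then have "\<delta> \<le> \<delta>/2" unfolding \<delta>_def[symmetric] .
  then have "\<delta> \<le> 0" by linarith
  moreover have "T a \<in> A" using TA a by blast
  ultimately have "dist (T a) a \<le> 0" using dle[OF _ a, of "T a"] by linarith
  then have "T a = a" by simp
  then show ?thesis using a AB by blast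
qed

theorem theorem2p1:
  fixes M :: "'a::metric_space set" and T :: "'a \<Rightarrow> 'a"
  assumes "bounded M"
    and "hyperconvex M"
    and "T ` M \<subseteq> M"
    and "diminishes_radius M T"
  shows "(\<exists>x\<in>M. T x = x) \<and> hyperconvex {x \<in> M. T x = x}"
proof
  note bM = assms(1) and hM = assms(2) and TM = assms(3) and dim = assms(4)
  have Madm: "admissible M M"
    using adm_inter_balls[OF bM, of "{}"] by simp
  have "\<exists>p\<in>M. \<forall>x r. (x,r) \<in> ({} :: ('a \<times> real) set) \<longrightarrow> p \<in> mball M x r"
    by (rule hyperD[OF hM]) auto
  then have Mne: "M \<noteq> {}" by blast
  show "\<exists>x\<in>M. T x = x" by (rule fp_in_adm[OF bM hM TM dim Madm Mne TM])
  show "hyperconvex {x \<in> M. T x = x}"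
    unfolding hyperconvex_def
  proof (intro allI impI)
    fix I :: "('a \<times> real) set"
    assume IF: "I \<subseteq> {x \<in> M. T x = x} \<times> UNIV"
      and pw: "\<forall>(x,r)\<in>I. \<forall>(y,s)\<in>I. dist x y \<le> r + s"
    have IM: "I \<subseteq> M \<times> UNIV" using IF by blast
    define B where "B = M \<inter> (\<Inter>(x,r)\<in>I. mball M x r)"
    have Badm: "admissible M B" unfolding B_def by (rule adm_inter_balls[OF bM IM])
    have "\<exists>p\<in>M. \<forall>x r. (x,r) \<in> I \<longrightarrow> p \<in> mball M x r"
    proof (rule hyperD[OF hM IM])
      fix x r y s assume "(x,r) \<in> I" "(y,s) \<in> I"
      then show "dist x y \<le> r + s" using pw by fastforce
    qed
    then have Bne: "B \<noteq> {}" unfolding B_def by blast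
    have TB: "T ` B \<subseteq> B"
    proof
      fix q assume "q \<in> T ` B"
      then obtain z where z: "z \<in> B" "q = T z" by blast
      have zM: "z \<in> M" using z unfolding B_def by blast
      have TzM: "T z \<in> M" using TM zM by blast
      have "T z \<in> mball M x r" if xr: "(x,r) \<in> I" for x r
      proof -
        have xM: "x \<in> M" and Tx: "T x = x" using xr IF by blast+
        have "M \<inter> (\<Inter>(y,s)\<in>{(x,0::real)}. mball M y s) = {x}"
          using xM by (auto simp: mball_iff)
        then have sadm: "admissible M {x}"
          using adm_inter_balls[OF bM, of "{(x,0)}"] xM by simp
        have "T ` {x} \<subseteq> {x}" using Tx by simp
        then have "radius_at (T z) (T ` {x}) \<le> radius_at z {x}"
          using dim sadm zM unfolding diminishes_radius_def by blast
        then have "dist (T z) x \<le> dist z x" using Tx by (simp add: radius_at_def)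
        moreover have "dist x z \<le> r" using z(1) xr unfolding B_def by (auto simp: mball_iff)
        ultimately have "dist x (T z) \<le> r" by (simp add: dist_commute)
        then show ?thesis using TzM by (simp add: mball_iff)
      qed
      then show "q \<in> B" unfolding B_def z(2) using TzM by blast
    qed
    obtain p where p: "p \<in> B" "T p = p" using fp_in_adm[OF bM hM TM dim Badm Bne TB] by blast
    have pF: "p \<in> {x \<in> M. T x = x}" using p unfolding B_def by blast
    have "p \<in> mball {x \<in> M. T x = x} x r" if "(x,r) \<in> I" for x r
      using p(1) pF that unfolding B_def by (auto simp: mball_iff)
    then show "{x \<in> M. T x = x} \<inter> (\<Inter>(x,r)\<in>I. mball {x \<in> M. T x = x} x r) \<noteq> {}"
      using pF by blast
  qed
qed

end
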